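(* For $0<m<2$, the element $\hat D_W+m\gamma$ of the C*-algebra $C^*\Pi\otimes\End(S)$ is invertible.
   Context: $d$ is a positive even integer, $\Pi\cong\mathbb{Z}^d$ with generators $t_1,\dots,t_d$, $C^*\Pi\cong C(\hat\Pi)$ its group C*-algebra (with $\hat\Pi=\Hom(\Pi,\mathbb{T})$ and $t\in\Pi$ viewed as the function $\chi\mapsto\chi(t)$). $S$ is the irreducible $\mathbb{Z}_2$-graded representation (grading $\gamma$) of the complex Clifford algebra generated by $c(v_1),\dots,c(v_d)$ with $c(v_j)c(v_l)+c(v_l)c(v_j)=-2\delta_{jl}$, $c(v_j)^*=-c(v_j)$. Set $\hat U_j=t_j$, $\hat\nabla_j=\hat U_j-1$, $\hat D=\sum_j c(v_j)(\hat\nabla_j-\hat\nabla_j^* )/2$, $\hat W=\sum_j(\hat\nabla_j+\hat\nabla_j^* )/2$, $\hat D_W=\hat D+\gamma\hat W$. *)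

theory Defs
  imports "HOL-Analysis.Analysis"
begin

text \<open>The C*-algebra C*Pi (x) End(S) is identified (via C*Pi = C(hat Pi)) with the algebra
  of continuous End(S)-valued functions on hat Pi = Hom(Z^d, T) = T^d; a character chi
  is encoded by the tuple z j = chi(t_j) (j < d), padded with 0 for j >= d.\<close>

definition adjm :: "complex^'n^'m \<Rightarrow> complex^'m^'n" where
  "adjm A = (\<chi> i j. cnj (A $ j $ i))"

definition csm :: "complex \<Rightarrow> complex^'n^'m \<Rightarrow> complex^'n^'m" where
  "csm a A = (\<chi> i j. a * A $ i $ j)"

definition graded_clifford_rep :: "nat \<Rightarrow> (nat \<Rightarrow> complex^'n^'n) \<Rightarrow> complex^'n^'n \<Rightarrow> bool" where
  "graded_clifford_rep d c g \<longleftrightarrow>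
     (\<forall>j<d. \<forall>l<d. c j ** c l + c l ** c j = csm (if j = l then -2 else 0) (mat 1)) \<and>
     (\<forall>j<d. adjm (c j) = - c j) \<and>
     g ** g = mat 1 \<and> adjm g = g \<and>
     (\<forall>j<d. c j ** g = - (g ** c j))"

definition graded_irreducible :: "nat \<Rightarrow> (nat \<Rightarrow> complex^'n^'n) \<Rightarrow> complex^'n^'n \<Rightarrow> bool" where
  "graded_irreducible d c g \<longleftrightarrow>
     (\<forall>V :: (complex^'n) set.
        (0 \<in> V \<and> (\<forall>v\<in>V. \<forall>w\<in>V. v + w \<in> V) \<and> (\<forall>a. \<forall>v\<in>V. (\<chi> i. a * v $ i) \<in> V) \<and>
         (\<forall>j<d. \<forall>v\<in>V. c j *v v \<in> V) \<and> (\<forall>v\<in>V. g *v v \<in> V))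
        \<longrightarrow> V = {0} \<or> V = UNIV)"

definition torus :: "nat \<Rightarrow> (nat \<Rightarrow> complex) set" where
  "torus d = {z. (\<forall>j<d. cmod (z j) = 1) \<and> (\<forall>j\<ge>d. z j = 0)}"

definition Uhat :: "nat \<Rightarrow> (nat \<Rightarrow> complex) \<Rightarrow> complex" where
  "Uhat j z = z j"

definition nablahat :: "nat \<Rightarrow> (nat \<Rightarrow> complex) \<Rightarrow> complex" where
  "nablahat j z = Uhat j z - 1"

definition Dhat :: "nat \<Rightarrow> (nat \<Rightarrow> complex^'n^'n) \<Rightarrow> (nat \<Rightarrow> complex) \<Rightarrow> complex^'n^'n" where
  "Dhat d c z = (\<Sum>j<d. csm ((nablahat j z - cnj (nablahat j z)) / 2) (c j))"

definition What :: "nat \<Rightarrow> (nat \<Rightarrow> complex) \<Rightarrow> complex" where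
  "What d z = (\<Sum>j<d. (nablahat j z + cnj (nablahat j z)) / 2)"

definition DWhat :: "nat \<Rightarrow> (nat \<Rightarrow> complex^'n^'n) \<Rightarrow> complex^'n^'n \<Rightarrow> (nat \<Rightarrow> complex) \<Rightarrow> complex^'n^'n" where
  "DWhat d c g z = Dhat d c z + csm (What d z) g"

definition invertible_CT :: "nat \<Rightarrow> ((nat \<Rightarrow> complex) \<Rightarrow> complex^'n^'n::finite) \<Rightarrow> bool" where
  "invertible_CT d A \<longleftrightarrow>
     (\<exists>F. continuous_on (torus d) F \<and>
          (\<forall>z\<in>torus d. F z ** A z = mat 1 \<and> A z ** F z = mat 1))"

end

theory Submission
  imports Defs
begin

lemma matrix_add_rdistrib: "((B + C) ** A) = (B ** A) + (C ** A)"
  by (simp add: vec_eq_iff matrix_matrix_mult_def sum.distrib distrib_right)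

lemma csm_mult_left: "csm a A ** B = csm a (A ** B)"
  by (simp add: vec_eq_iff csm_def matrix_matrix_mult_def sum_distrib_left mult.assoc)
lemma csm_mult_right: "A ** csm a B = csm a (A ** B)"
  by (simp add: vec_eq_iff csm_def matrix_matrix_mult_def sum_distrib_left mult.left_commute)
lemma csm_add: "csm a (A + B) = csm a A + csm a B"
  by (simp add: vec_eq_iff csm_def algebra_simps)
lemma csm_add2: "csm (a + b) A = csm a A + csm b A"
  by (simp add: vec_eq_iff csm_def algebra_simps)
lemma csm_csm: "csm a (csm b A) = csm (a*b) A"
  by (simp add: vec_eq_iff csm_def algebra_simps)
lemma csm_one: "csm 1 A = A"
  by (simp add: vec_eq_iff csm_def)
lemma csm_zero: "csm 0 A = 0" "csm a 0 = 0"
  by (simp_all add: vec_eq_iff csm_def)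
lemma csm_neg: "csm a (- A) = - csm a A" "csm (-a) A = - csm a A"
  by (simp_all add: vec_eq_iff csm_def)
lemma sum_mult_right: "(\<Sum>j<(n::nat). A j) ** B = (\<Sum>j<n. A j ** B)"
  by (induction n) (simp_all add: matrix_add_rdistrib)
lemma sum_mult_left: "B ** (\<Sum>j<(n::nat). A j) = (\<Sum>j<n. B ** A j)"
  by (induction n) (simp_all add: matrix_add_ldistrib)
lemma csm_sum: "csm a (\<Sum>j<(n::nat). A j) = (\<Sum>j<n. csm a (A j))"
  by (induction n) (simp_all add: csm_add csm_zero)

lemma expand_sq:
  fixes X Y :: "complex^'n::finite^'n"
  shows "(X + csm a Y) ** (X + csm a Y) = X ** X + csm a (X ** Y + Y ** X) + csm (a*a) (Y ** Y)"
proof -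
  have "(X + csm a Y) ** (X + csm a Y) = X ** X + (X ** csm a Y + csm a Y ** X) + csm a Y ** csm a Y"
    by (simp only: matrix_add_rdistrib matrix_add_ldistrib add.assoc add.left_commute)
  also have "X ** csm a Y + csm a Y ** X = csm a (X ** Y + Y ** X)"
    by (simp only: csm_mult_left csm_mult_right csm_add)
  also have "csm a Y ** csm a Y = csm (a*a) (Y ** Y)"
    by (simp only: csm_mult_left csm_mult_right csm_csm)
  finally show ?thesis .
qed

lemma anti_step:
  fixes X Y Z :: "complex^'n::finite^'n"
  assumes "X ** Z + Z ** X = 0" "Y ** Z + Z ** Y = 0"
  shows "(X + csm a Y) ** Z + Z ** (X + csm a Y) = 0"
proof -
  have "(X + csm a Y) ** Z + Z ** (X + csm a Y) = (X ** Z + Z ** X) + csm a (Y ** Z + Z ** Y)"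
    by (simp only: matrix_add_rdistrib matrix_add_ldistrib csm_mult_left csm_mult_right csm_add add.assoc add.left_commute)
  then show ?thesis using assms by (simp add: csm_zero)
qed

lemma anti_k:
  assumes cl: "graded_clifford_rep d c g" and "n \<le> k" "k < d"
  shows "(\<Sum>j<n. csm (a j) (c j)) ** c k + c k ** (\<Sum>j<n. csm (a j) (c j)) = 0"
  using assms(2)
proof (induction n)
  case 0 then show ?case by simp
next
  case (Suc n)
  have "c n ** c k + c k ** c n = csm (if n = k then -2 else 0) (mat 1)"
    using cl Suc.prems assms(3) unfolding graded_clifford_rep_def by auto
  then have "c n ** c k + c k ** c n = 0" using Suc.prems by (simp add: csm_zero)
  then show ?case using Suc by (simp only: sum.lessThan_Suc anti_step Suc_leD)
qed

lemma anti_g: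
  assumes cl: "graded_clifford_rep d c g" and "n \<le> d"
  shows "(\<Sum>j<n. csm (a j) (c j)) ** g + g ** (\<Sum>j<n. csm (a j) (c j)) = 0"
  using assms(2)
proof (induction n)
  case 0 then show ?case by simp
next
  case (Suc n)
  have "c n ** g + g ** c n = 0"
    using cl Suc.prems unfolding graded_clifford_rep_def by auto
  then show ?case using Suc by (simp only: sum.lessThan_Suc anti_step Suc_leD)
qed

lemma sq_X:
  assumes cl: "graded_clifford_rep d c g" and "n \<le> d"
  shows "(\<Sum>j<n. csm (a j) (c j)) ** (\<Sum>j<n. csm (a j) (c j)) = csm (- (\<Sum>j<n. (a j)^2)) (mat 1)"
  using assms(2)
proof (induction n)
  case 0 then show ?case by (simp add: csm_zero)
next
  case (Suc n)
  let ?X = "\<Sum>j<n. csm (a j) (c j)"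
  have h: "c n ** c n + c n ** c n = csm (-2) (mat 1)"
    using cl Suc.prems unfolding graded_clifford_rep_def by auto
  have cc: "c n ** c n = csm (-1) (mat 1)"
    using h by (simp add: vec_eq_iff csm_def)
  have an: "?X ** c n + c n ** ?X = 0" using anti_k[OF cl, of n n a] Suc.prems by simp
  have "(?X + csm (a n) (c n)) ** (?X + csm (a n) (c n))
     = ?X ** ?X + csm (a n) (?X ** c n + c n ** ?X) + csm (a n * a n) (c n ** c n)"
    by (rule expand_sq)
  also have "\<dots> = csm (- (\<Sum>j<Suc n. (a j)^2)) (mat 1)"
    using Suc an cc by (simp add: csm_zero csm_csm power2_eq_square flip: csm_add2)
  finally show ?case by simp
qed

lemma cont_csm: "continuous_on S f \<Longrightarrow> continuous_on S A \<Longrightarrow> continuous_on S (\<lambda>z. csm (f z) (A z))"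
  unfolding csm_def by (intro continuous_on_vec_lambda continuous_on_mult continuous_on_component)

lemma even_sum:
  assumes "\<And>j. j < (n::nat) \<Longrightarrow> x j = 0 \<or> x j = (-2::real)"
  shows "\<exists>k::nat. (\<Sum>j<n. x j) = - 2 * real k"
  using assms
proof (induction n)
  case 0 then show ?case by simp
next
  case (Suc n)
  then obtain k where k: "(\<Sum>j<n. x j) = - 2 * real k" by auto
  have "x n = 0 \<or> x n = -2" using Suc.prems by simp
  then show ?case
  proof
    assume "x n = 0" then show ?thesis using k by auto
  next
    assume "x n = -2" then show ?thesis using k by (intro exI[of _ "Suc k"]) auto
  qed
qed

theorem lemma3p3:
  fixes d :: nat and c :: "nat \<Rightarrow> complex^'n::finite^'n" and g :: "complex^'n^'n" and m :: real
  assumes "d > 0" and "even d"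
    and "graded_clifford_rep d c g" and "graded_irreducible d c g"
    and "0 < m" and "m < 2"
  shows "invertible_CT d (\<lambda>z. DWhat d c g z + csm (complex_of_real m) g)"
proof -
  note cl = assms(3)
  define a where "a z j = (nablahat j z - cnj (nablahat j z)) / 2" for z j
  define b where "b z = What d z + complex_of_real m" for z
  define A where "A z = DWhat d c g z + csm (complex_of_real m) g" for z
  define L where "L z = (b z)^2 - (\<Sum>j<d. (a z j)^2)" for z
  define r where "r z = ((\<Sum>j<d. Re (z j) - 1) + m)^2 + (\<Sum>j<d. (Im (z j))^2)" for z
  have Aeq: "A z = (\<Sum>j<d. csm (a z j) (c j)) + csm (b z) g" for z
    unfolding A_def DWhat_def Dhat_def a_def b_def by (simp add: csm_add2 add.assoc)
  have gg: "g ** g = mat 1" using cl unfolding graded_clifford_rep_def by auto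
  have sq: "A z ** A z = csm (L z) (mat 1)" for z
  proof -
    let ?X = "\<Sum>j<d. csm (a z j) (c j)"
    have "A z ** A z = ?X ** ?X + csm (b z) (?X ** g + g ** ?X) + csm (b z * b z) (g ** g)"
      unfolding Aeq by (rule expand_sq)
    also have "\<dots> = csm (L z) (mat 1)"
      using sq_X[OF cl order_refl, of "a z"] anti_g[OF cl order_refl, of "a z"] gg
      by (simp add: csm_zero L_def power2_eq_square flip: csm_add2)
    finally show ?thesis .
  qed
  have Lr: "L z = complex_of_real (r z)" for z
  proof -
    have a1: "a z j = \<i> * complex_of_real (Im (z j))" for j
      unfolding a_def nablahat_def Uhat_def by (simp add: complex_eq_iff)
    have w: "What d z = complex_of_real (\<Sum>j<d. Re (z j) - 1)"
      unfolding What_def nablahat_def Uhat_def by (simp add: complex_eq_iff Re_sum Im_sum, rule sum.cong, auto)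
    show ?thesis unfolding L_def r_def b_def a1 w
      by (simp add: power_mult_distrib sum_negf)
  qed
  have rpos: "r z > 0" if z: "z \<in> torus d" for z
  proof (rule ccontr)
    assume "\<not> r z > 0"
    have nn: "0 \<le> (\<Sum>j<d. (Im (z j))^2)" by (intro sum_nonneg) auto
    have "r z \<le> 0" using \<open>\<not> r z > 0\<close> by simp
    then have s0: "((\<Sum>j<d. Re (z j) - 1) + m)^2 = 0" and i0: "(\<Sum>j<d. (Im (z j))^2) = 0"
      unfolding r_def using nn by (smt (verit) zero_le_power2)+
    have im: "Im (z j) = 0" if "j < d" for j
      using i0 sum_nonneg_eq_0_iff[of "{..<d}" "\<lambda>j. (Im (z j))^2"] that by auto
    have re: "Re (z j) - 1 = 0 \<or> Re (z j) - 1 = -2" if "j < d" for j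
    proof -
      have "cmod (z j) = 1" using z that unfolding torus_def by auto
      then have "\<bar>Re (z j)\<bar> = 1" using im[OF that] by (simp add: cmod_def)
      then show ?thesis by auto
    qed
    obtain k :: nat where k: "(\<Sum>j<d. Re (z j) - 1) = - 2 * real k"
      using even_sum[of d "\<lambda>j. Re (z j) - 1"] re by blast
    from s0 have "m = 2 * real k" using k by simp
    then show False using assms(5,6)
      by (cases k) auto
  qed
  have cA: "continuous_on (torus d) A"
    unfolding Aeq a_def b_def What_def nablahat_def Uhat_def
    by (intro continuous_on_add continuous_on_sum cont_csm continuous_on_const
          continuous_on_divide continuous_on_diff continuous_on_cnj
          continuous_on_subset[OF continuous_on_product_coordinates]) auto
  have cL: "continuous_on (torus d) L"
    unfolding L_def a_def b_def What_def nablahat_def Uhat_def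
    by (intro continuous_on_add continuous_on_sum continuous_on_power continuous_on_const
          continuous_on_divide continuous_on_diff continuous_on_cnj
          continuous_on_subset[OF continuous_on_product_coordinates]) auto
  have Lnz: "L z \<noteq> 0" if "z \<in> torus d" for z
    using rpos[OF that] Lr[of z] by auto
  define F where "F z = csm (1 / L z) (A z)" for z
  have "continuous_on (torus d) F"
    unfolding F_def
    by (intro cont_csm cA continuous_on_divide continuous_on_const cL) (use Lnz in auto)
  moreover have "F z ** A z = mat 1 \<and> A z ** F z = mat 1" if "z \<in> torus d" for z
    unfolding F_def using Lnz[OF that]
    by (simp add: csm_mult_left csm_mult_right sq csm_csm csm_one)
  ultimately show ?thesis unfolding invertible_CT_def A_def by blast
qed
end
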